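(* Let $n\ge 3$. The characteristic polynomial $\det(xI-A)$ of the adjacency matrix $A$ of the power graph $P(G(n))$ of the gyrogroup $G(n)$ (defined in the context) is $$x^{2^{n-1}-1}(1+x)^{2^{n-1}-2}\left[x^3+(2-2^{n-1})x^2+(1-2^n)x+2^{2n-2}-2^n\right].$$
   Context: Let $n\ge 3$ be an integer and $m=2^{n-1}$. Let $P(n)=\{0,1,\dots,m-1\}$, $H(n)=\{m,m+1,\dots,2^n-1\}$ and $G(n)=P(n)\cup H(n)$. For $i,j\in G(n)$ let $t,s,k\in P(n)$ be the residues modulo $m$ (taken in $\{0,\dots,m-1\}$) of $i+j$, $i+(\frac m2-1)j$ and $(\frac m2+1)i+(\frac m2-1)j$, respectively, and define $i\oplus j=t$ if $i,j\in P(n)$; $i\oplus j=t+m$ if $i\in P(n),j\in H(n)$; $i\oplus j=s+m$ if $i\in H(n),j\in P(n)$; $i\oplus j=k$ if $i,j\in H(n)$. Then $(G(n),\oplus)$ is a gyrogroup with identity $e=0$. Powers are defined by $a^1=a$, $a^{k+1}=a^k\oplus a$. The power graph $P(G(n))$ is the simple undirected graph with vertex set $G(n)$ in which distinct vertices $u,v$ are adjacent if and only if $u^k=v$ or $v^k=u$ for some positive integer $k$. *)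

theory Defs
  imports "Jordan_Normal_Form.Char_Poly"
begin

text \<open>The gyrogroup G(n) on the carrier {0,...,2^n-1}, with m = 2^(n-1).\<close>

definition gyro_op :: "nat \<Rightarrow> nat \<Rightarrow> nat \<Rightarrow> nat" where
  "gyro_op n i j =
     (let m = 2 ^ (n - 1);
          t = (i + j) mod m;
          s = (i + (m div 2 - 1) * j) mod m;
          k = ((m div 2 + 1) * i + (m div 2 - 1) * j) mod m
      in if i < m \<and> j < m then t
         else if i < m \<and> m \<le> j then t + m
         else if m \<le> i \<and> j < m then s + m
         else k)"

text \<open>Powers: a^1 = a, a^(k+1) = a^k \<oplus> a (value at k = 0 is irrelevant).\<close>
fun gyro_pow :: "nat \<Rightarrow> nat \<Rightarrow> nat \<Rightarrow> nat" where
  "gyro_pow n a 0 = 0"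
| "gyro_pow n a (Suc 0) = a"
| "gyro_pow n a (Suc (Suc k)) = gyro_op n (gyro_pow n a (Suc k)) a"

definition power_graph_adj :: "nat \<Rightarrow> nat \<Rightarrow> nat \<Rightarrow> bool" where
  "power_graph_adj n u v \<longleftrightarrow> u \<noteq> v \<and>
     (\<exists>k>0. gyro_pow n u k = v \<or> gyro_pow n v k = u)"

definition power_graph_adj_mat :: "nat \<Rightarrow> int mat" where
  "power_graph_adj_mat n = mat (2 ^ n) (2 ^ n)
     (\<lambda>(u, v). if power_graph_adj n u v then 1 else 0)"

end

theory Submission
  imports Defs
begin

abbreviation X :: "int poly" where "X \<equiv> [:0,1:]"

lemma mult_entry: "A \<in> carrier_mat n k \<Longrightarrow> B \<in> carrier_mat k l \<Longrightarrow> i < n \<Longrightarrow> j < l \<Longrightarrow>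
  (A * B) $$ (i,j) = (\<Sum>q\<in>{0..<k}. A $$ (i,q) * B $$ (q,j))"
  by (simp add: scalar_prod_def)

lemma prod_diag: "A \<in> carrier_mat n n \<Longrightarrow> prod_list (diag_mat A) = (\<Prod>i\<in>{0..<n}. A $$ (i,i))"
  by (metis carrier_matD(1) diag_mat_def distinct_upt prod.distinct_set_conv_list set_upt)

definition KK :: "nat \<Rightarrow> int poly mat" where
  "KK m = mat m m (\<lambda>(i,j). if j = 0 then (if i = 0 then X^2 - of_nat m else - X)
       else if i = j then X else -1)"

definition R2 :: "nat \<Rightarrow> int poly mat" where
  "R2 m = mat m m (\<lambda>(i,j). if i = j then 1 else if i = 1 \<and> 2 \<le> j then -1 else 0)"

definition K2 :: "nat \<Rightarrow> int poly mat" where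
  "K2 m = mat m m (\<lambda>(i,j). if j = 0 then (if i = 0 then X^2 - of_nat m else - X)
       else if j = 1 then (if i = 1 then X else -1)
       else if i = 0 then 0 else if i = 1 then -1 - X else if i = j then X + 1 else 0)"

lemma KK_R2: assumes "m \<ge> 2" shows "KK m * R2 m = K2 m"
proof (rule eq_matI)
  fix i j assume ij: "i < dim_row (K2 m)" "j < dim_col (K2 m)"
  hence i: "i < m" and j: "j < m" by (auto simp: K2_def)
  have "(KK m * R2 m) $$ (i,j) = (\<Sum>q\<in>{0..<m}. KK m $$ (i,q) * R2 m $$ (q,j))"
    by (rule mult_entry[of _ m m _ m], insert i j, auto simp: KK_def R2_def)
  also have "\<dots> = (\<Sum>q\<in>{0..<m}. (if q = j then KK m $$ (i,q) else 0) - (if q = 1 \<and> 2 \<le> j then KK m $$ (i,q) else 0))"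
    by (rule sum.cong, insert j, auto simp: R2_def)
  also have "\<dots> = KK m $$ (i,j) - (if 2 \<le> j then KK m $$ (i,1) else 0)"
    using j assms by (simp add: sum_subtractf)
  also have "\<dots> = K2 m $$ (i,j)"
    using i j by (auto simp: KK_def K2_def)
  finally show "(KK m * R2 m) $$ (i,j) = K2 m $$ (i,j)" .
qed (auto simp: K2_def KK_def R2_def)

lemma det_R2: "det (R2 m) = 1"
  by (subst det_upper_triangular[of _ m], auto simp: R2_def, subst prod_diag[of _ m], auto)

definition LL :: "nat \<Rightarrow> int poly mat" where
  "LL m = mat m m (\<lambda>(i,j). if i = j then 1 else if i = 1 \<and> 2 \<le> j then 1 else 0)"

lemma det_LL: "det (LL m) = 1"
  by (subst det_upper_triangular[of _ m], auto simp: LL_def, subst prod_diag[of _ m], auto)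

definition K3 :: "nat \<Rightarrow> int poly mat" where
  "K3 m = mat m m (\<lambda>(i,j). if i = 0 then (if j = 0 then X^2 - of_nat m else if j = 1 then -1 else 0)
       else if i = 1 then (if j = 0 then - (of_nat (m - 1) * X) else if j = 1 then X - of_nat (m - 2) else 0)
       else if j = 0 then - X else if j = 1 then -1 else if i = j then X + 1 else 0)"

lemma LL_K2: assumes "m \<ge> 2" shows "LL m * K2 m = K3 m"
proof (rule eq_matI)
  fix i j assume ij: "i < dim_row (K3 m)" "j < dim_col (K3 m)"
  hence i: "i < m" and j: "j < m" by (auto simp: K3_def)
  have "(LL m * K2 m) $$ (i,j) = (\<Sum>q\<in>{0..<m}. LL m $$ (i,q) * K2 m $$ (q,j))"
    by (rule mult_entry[of _ m m _ m], insert i j, auto simp: LL_def K2_def)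
  also have "\<dots> = (\<Sum>q\<in>{0..<m}. (if q = i then K2 m $$ (q,j) else 0) + (if i = 1 \<and> q \<in> {2..<m} then K2 m $$ (q,j) else 0))"
    by (rule sum.cong, insert i, auto simp: LL_def)
  also have "\<dots> = K2 m $$ (i,j) + (if i = 1 then (\<Sum>q\<in>{2..<m}. K2 m $$ (q,j)) else 0)"
  proof -
    have "(\<Sum>q\<in>{0..<m}. (if i = 1 \<and> q \<in> {2..<m} then K2 m $$ (q,j) else 0)) = 
      (if i = 1 then (\<Sum>q\<in>{2..<m}. K2 m $$ (q,j)) else 0)"
    proof -
      have e: "{0..<m} \<inter> Collect ((\<le>) 2) = {2..<m}" by auto
      show ?thesis by (simp add: sum.If_cases e)
    qed
    thus ?thesis using i by (simp add: sum.distrib)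
  qed
  also have "\<dots> = K3 m $$ (i,j)"
  proof (cases "i = 1")
    case False thus ?thesis using i j by (auto simp: K2_def K3_def)
  next
    case True
    have s: "(\<Sum>q\<in>{2..<m}. K2 m $$ (q,j)) = (if j = 0 then - (of_nat (m-2) * X) else if j = 1 then - of_nat (m - 2) else X + 1)"
    proof -
      have "(\<Sum>q\<in>{2..<m}. K2 m $$ (q,j)) = (\<Sum>q\<in>{2..<m}. if j = 0 then - X else if j = 1 then -1 else if q = j then X + 1 else 0)"
        by (rule sum.cong, insert j, auto simp: K2_def)
      also have "\<dots> = (if j = 0 then - (of_nat (m-2) * X) else if j = 1 then - of_nat (m - 2) else X + 1)"
      proof (cases "j = 0 \<or> j = 1")
        case True thus ?thesis by auto
      next
        case False
        hence "j \<in> {2..<m}" using j by auto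
        thus ?thesis using False by (simp add: sum.delta)
      qed
      finally show ?thesis .
    qed
    have m1: "of_nat (m - 1) = (of_nat (m - 2) + 1 :: int poly)" using assms
    proof -
      have "m - 1 = Suc (m - 2)" using assms by simp
      thus ?thesis by simp
    qed
    show ?thesis unfolding s using True i j assms
      by (auto simp: K2_def K3_def m1 algebra_simps)
  qed
  finally show "(LL m * K2 m) $$ (i,j) = K3 m $$ (i,j)" .
qed (auto simp: K3_def LL_def K2_def)


definition RU :: "nat \<Rightarrow> int poly \<Rightarrow> int poly mat" where
  "RU m a = mat m m (\<lambda>(i,j). if i = j then 1 else if i = 0 \<and> j = 1 then a else 0)"

definition RR :: "nat \<Rightarrow> int poly \<Rightarrow> int poly mat" where
  "RR m a = swaprows 0 1 (RU m a)"

lemma det_RR: assumes "m \<ge> 2" shows "det (RR m a) = -1"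
proof -
  have "det (RU m a) = 1"
    by (subst det_upper_triangular[of _ m], auto simp: RU_def, subst prod_diag[of _ m], auto)
  thus ?thesis unfolding RR_def using assms by (subst det_swaprows[of _ m], auto simp: RU_def)
qed

lemma RR_carrier: "RR m a \<in> carrier_mat m m" by (auto simp: RR_def RU_def)

lemma RR_entry: "2 \<le> m \<Longrightarrow> i < m \<Longrightarrow> j < m \<Longrightarrow> RR m a $$ (i,j) =
  (if i = 0 then (if j = 1 then 1 else 0) else if i = 1 then (if j = 0 then 1 else if j = 1 then a else 0)
   else if i = j then 1 else 0)"
  by (auto simp: RR_def RU_def)

definition cub :: "nat \<Rightarrow> int poly" where
  "cub m = - (of_nat (m - 1) * X) + (X^2 - of_nat m) * (X - of_nat (m - 2))"

definition K5 :: "nat \<Rightarrow> int poly mat" where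
  "K5 m = mat m m (\<lambda>(i,j). if i = 0 then (if j = 0 then -1 else 0)
       else if i = 1 then (if j = 0 then X - of_nat (m - 2) else if j = 1 then cub m else 0)
       else if j = 0 then -1 else if j = 1 then - X - (X^2 - of_nat m) else if i = j then X + 1 else 0)"

lemma K3_RR: assumes "m \<ge> 2" shows "K3 m * RR m (X^2 - of_nat m) = K5 m"
proof (rule eq_matI)
  let ?a = "X^2 - of_nat m"
  fix i j assume ij: "i < dim_row (K5 m)" "j < dim_col (K5 m)"
  hence i: "i < m" and j: "j < m" by (auto simp: K5_def)
  have "(K3 m * RR m ?a) $$ (i,j) = (\<Sum>q\<in>{0..<m}. K3 m $$ (i,q) * RR m ?a $$ (q,j))"
    by (rule mult_entry[of _ m m _ m], insert i j RR_carrier, auto simp: K3_def)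
  also have "\<dots> = (if j = 0 then K3 m $$ (i,1) else if j = 1 then K3 m $$ (i,0) + ?a * K3 m $$ (i,1) else K3 m $$ (i,j))"
  proof (cases "j = 0")
    case True
    have "(\<Sum>q\<in>{0..<m}. K3 m $$ (i,q) * RR m ?a $$ (q,j)) = (\<Sum>q\<in>{0..<m}. if q = 1 then K3 m $$ (i,q) else 0)"
      by (rule sum.cong, insert j True assms, auto simp: RR_entry)
    thus ?thesis using True assms by simp
  next
    case F0: False
    show ?thesis
    proof (cases "j = 1")
      case True
      have "(\<Sum>q\<in>{0..<m}. K3 m $$ (i,q) * RR m ?a $$ (q,j)) = 
        (\<Sum>q\<in>{0..<m}. (if q = 0 then K3 m $$ (i,q) else 0) + (if q = 1 then ?a * K3 m $$ (i,q) else 0))"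
        by (rule sum.cong, insert j True assms, auto simp: RR_entry)
      thus ?thesis using True assms by (simp add: sum.distrib)
    next
      case False
      have "(\<Sum>q\<in>{0..<m}. K3 m $$ (i,q) * RR m ?a $$ (q,j)) = (\<Sum>q\<in>{0..<m}. if q = j then K3 m $$ (i,q) else 0)"
        by (rule sum.cong, insert j False F0 assms, auto simp: RR_entry)
      thus ?thesis using False F0 j by simp
    qed
  qed
  also have "\<dots> = K5 m $$ (i,j)"
    using i j assms by (auto simp: K3_def K5_def cub_def algebra_simps)
  finally show "(K3 m * RR m ?a) $$ (i,j) = K5 m $$ (i,j)" .
qed (auto simp: K5_def K3_def RR_def RU_def)

lemma det_K5: assumes "m \<ge> 2" shows "det (K5 m) = - (cub m * (X + 1) ^ (m - 2))"
proof -
  have "det (K5 m) = (\<Prod>i\<in>{0..<m}. K5 m $$ (i,i))"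
    by (subst det_lower_triangular[of m], auto simp: K5_def, subst prod_diag[of _ m], auto simp: K5_def)
  also have "{0..<m} = insert 0 (insert 1 {2..<m})" using assms by auto
  also have "(\<Prod>i\<in>insert 0 (insert 1 {2..<m}). K5 m $$ (i,i)) = (-1) * cub m * (\<Prod>i\<in>{2..<m}. K5 m $$ (i,i))"
    using assms by (simp add: K5_def)
  also have "(\<Prod>i\<in>{2..<m}. K5 m $$ (i,i)) = (\<Prod>i\<in>{2..<m}. X + 1)"
    by (rule prod.cong, auto simp: K5_def)
  finally show ?thesis by simp
qed

lemma KK_carrier: "KK m \<in> carrier_mat m m" by (auto simp: KK_def)

lemma det_KK: assumes "m \<ge> 2" shows "det (KK m) = cub m * (X + 1) ^ (m - 2)"
proof -
  have c: "R2 m \<in> carrier_mat m m" "LL m \<in> carrier_mat m m" "K2 m \<in> carrier_mat m m" "K3 m \<in> carrier_mat m m"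
    by (auto simp: R2_def LL_def K2_def K3_def)
  have "det (K5 m) = det (K3 m) * det (RR m (X^2 - of_nat m))"
    unfolding K3_RR[OF assms, symmetric] by (rule det_mult[OF c(4) RR_carrier])
  also have "det (K3 m) = det (LL m) * det (K2 m)"
    unfolding LL_K2[OF assms, symmetric] by (rule det_mult[OF c(2) c(3)])
  also have "det (K2 m) = det (KK m) * det (R2 m)"
    unfolding KK_R2[OF assms, symmetric] by (rule det_mult[OF KK_carrier c(1)])
  finally show ?thesis using assms by (simp add: det_RR det_LL det_R2 det_K5)
qed


definition adjc :: "nat \<Rightarrow> nat \<Rightarrow> nat \<Rightarrow> bool" where
  "adjc m i j \<longleftrightarrow> i \<noteq> j \<and> ((i < m \<and> j < m) \<or> (i = 0 \<and> m \<le> j) \<or> (j = 0 \<and> m \<le> i))"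

definition AM :: "nat \<Rightarrow> int mat" where
  "AM m = mat (2*m) (2*m) (\<lambda>(i,j). if adjc m i j then 1 else 0)"

definition MM :: "nat \<Rightarrow> int poly mat" where
  "MM m = mat (2*m) (2*m) (\<lambda>(i,j). if i = j then X else if adjc m i j then -1 else 0)"

lemma cpm_AM: "char_poly_matrix (AM m) = MM m"
  by (rule eq_matI, auto simp: char_poly_matrix_def AM_def MM_def adjc_def)

definition R1 :: "nat \<Rightarrow> int poly mat" where
  "R1 m = mat (2*m) (2*m) (\<lambda>(i,j). if j = 0 then (if i = 0 then X else if m \<le> i then 1 else 0)
     else if i = j then 1 else 0)"

lemma det_R1: assumes "m \<ge> 1" shows "det (R1 m) = X"
proof -
  have "det (R1 m) = (\<Prod>i\<in>{0..<2*m}. R1 m $$ (i,i))"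
    by (subst det_lower_triangular[of "2*m"], auto simp: R1_def, subst prod_diag[of _ "2*m"], auto simp: R1_def)
  also have "{0..<2*m} = insert 0 {1..<2*m}" using assms by auto
  also have "(\<Prod>i\<in>insert 0 {1..<2*m}. R1 m $$ (i,i)) = X * (\<Prod>i\<in>{1..<2*m}. R1 m $$ (i,i))"
    using assms by (simp add: R1_def)
  also have "(\<Prod>i\<in>{1..<2*m}. R1 m $$ (i,i)) = 1"
    by (rule prod.neutral, auto simp: R1_def)
  finally show ?thesis by simp
qed

definition BB :: "nat \<Rightarrow> int poly mat" where
  "BB m = mat m m (\<lambda>(i,j). if i = 0 then -1 else 0)"

definition M1 :: "nat \<Rightarrow> int poly mat" where
  "M1 m = four_block_mat (KK m) (BB m) (0\<^sub>m m m) (X \<cdot>\<^sub>m 1\<^sub>m m)"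

lemma MM_R1: assumes "m \<ge> 1" shows "MM m * R1 m = M1 m"
proof (rule eq_matI)
  fix i j assume ij: "i < dim_row (M1 m)" "j < dim_col (M1 m)"
  hence i: "i < 2*m" and j: "j < 2*m" by (auto simp: M1_def KK_def)
  have "(MM m * R1 m) $$ (i,j) = (\<Sum>q\<in>{0..<2*m}. MM m $$ (i,q) * R1 m $$ (q,j))"
    by (rule mult_entry[of _ "2*m" "2*m" _ "2*m"], insert i j, auto simp: MM_def R1_def)
  also have "\<dots> = (if j = 0 then X * MM m $$ (i,0) + (\<Sum>q\<in>{m..<2*m}. MM m $$ (i,q)) else MM m $$ (i,j))"
  proof (cases "j = 0")
    case True
    have "(\<Sum>q\<in>{0..<2*m}. MM m $$ (i,q) * R1 m $$ (q,j)) = 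
       (\<Sum>q\<in>{0..<2*m}. (if q = 0 then X * MM m $$ (i,q) else 0) + (if q \<in> {m..<2*m} then MM m $$ (i,q) else 0))"
      by (rule sum.cong, insert True assms, auto simp: R1_def)
    also have "\<dots> = X * MM m $$ (i,0) + (\<Sum>q\<in>{m..<2*m}. MM m $$ (i,q))"
    proof -
      have e: "{0..<2*m} \<inter> Collect ((\<le>) m) = {m..<2*m}" by auto
      show ?thesis using assms by (simp add: sum.distrib sum.If_cases e)
    qed
    finally show ?thesis using True by simp
  next
    case False
    have "(\<Sum>q\<in>{0..<2*m}. MM m $$ (i,q) * R1 m $$ (q,j)) = (\<Sum>q\<in>{0..<2*m}. if q = j then MM m $$ (i,q) else 0)"
      by (rule sum.cong, insert j False, auto simp: R1_def)
    thus ?thesis using False j by simp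
  qed
  also have "\<dots> = M1 m $$ (i,j)"
  proof (cases "j = 0")
    case False
    thus ?thesis using i j by (auto simp: M1_def MM_def KK_def BB_def adjc_def)
  next
    case True
    have s: "(\<Sum>q\<in>{m..<2*m}. MM m $$ (i,q)) = (if i = 0 then - of_nat m else if i < m then 0 else X)"
    proof -
      have "(\<Sum>q\<in>{m..<2*m}. MM m $$ (i,q)) = (\<Sum>q\<in>{m..<2*m}. if i = 0 then -1 else if i < m then 0 else if q = i then X else 0)"
        by (rule sum.cong, insert i assms, auto simp: MM_def adjc_def)
      also have "\<dots> = (if i = 0 then - of_nat m else if i < m then 0 else X)"
      proof (cases "i = 0 \<or> i < m")
        case True thus ?thesis by auto
      next
        case False
        hence "i \<in> {m..<2*m}" using i by auto
        thus ?thesis using False by simp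
      qed
      finally show ?thesis .
    qed
    show ?thesis unfolding s using i True assms
      by (auto simp: M1_def MM_def KK_def BB_def adjc_def power2_eq_square)
  qed
  finally show "(MM m * R1 m) $$ (i,j) = M1 m $$ (i,j)" .
qed (auto simp: M1_def MM_def R1_def KK_def)

lemma det_MM: assumes "m \<ge> 2" shows "det (MM m) = X ^ (m - 1) * (X + 1) ^ (m - 2) * cub m"
proof -
  have c: "MM m \<in> carrier_mat (2*m) (2*m)" "R1 m \<in> carrier_mat (2*m) (2*m)" by (auto simp: MM_def R1_def)
  have "det (M1 m) = det (KK m) * det (X \<cdot>\<^sub>m 1\<^sub>m m)"
    unfolding M1_def by (rule det_four_block_mat_lower_left_zero[OF KK_carrier], auto simp: BB_def)
  also have "det (X \<cdot>\<^sub>m 1\<^sub>m m) = X ^ m" by simp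
  finally have 1: "det (M1 m) = det (KK m) * X ^ m" .
  have m1: "m \<ge> 1" using assms by simp
  have "det (M1 m) = det (MM m) * det (R1 m)"
    unfolding MM_R1[OF m1, symmetric] by (rule det_mult[OF c])
  also have "det (R1 m) = X" using det_R1[OF m1] .
  finally have "det (M1 m) = det (MM m) * X" .
  obtain k where k: "m = Suc k" using assms by (cases m, auto)
  have e2: "det (MM m) * X = (cub m * (X + 1) ^ (m - 2) * X ^ (m - 1)) * X"
  proof -
    have "det (MM m) * X = det (KK m) * X ^ m" using 1 \<open>det (M1 m) = det (MM m) * X\<close> by simp
    also have "\<dots> = cub m * (X + 1) ^ (m - 2) * X ^ m" by (simp only: det_KK[OF assms])
    also have "\<dots> = (cub m * (X + 1) ^ (m - 2) * X ^ (m - 1)) * X"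
      unfolding k by (simp only: power_Suc2 diff_Suc_1 mult.assoc)
    finally show ?thesis .
  qed
  have X0: "X \<noteq> 0" by simp
  have "det (MM m) = cub m * (X + 1) ^ (m - 2) * X ^ (m - 1)"
    using e2 mult_right_cancel[OF X0] by blast
  thus ?thesis by (simp add: ac_simps)
qed

lemma char_poly_AM: assumes "m \<ge> 2" shows "char_poly (AM m) = X ^ (m - 1) * (X + 1) ^ (m - 2) * cub m"
  unfolding char_poly_def cpm_AM using det_MM[OF assms] .


lemma half_m: assumes "n \<ge> 3" shows "(2::nat) ^ (n - 1) = 2 * (2 ^ (n - 1) div 2)" "(2::nat) ^ (n - 1) div 2 \<ge> 2"
proof -
  define k where "k = n - 3"
  have k: "n = Suc (Suc (Suc k))" using assms unfolding k_def by simp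
  show "(2::nat) ^ (n - 1) = 2 * (2 ^ (n - 1) div 2)" unfolding k by simp
  have "(2::nat) ^ (n - 1) div 2 = 2 * 2 ^ k" unfolding k by simp
  thus "(2::nat) ^ (n - 1) div 2 \<ge> 2" by simp
qed

lemma pow_P: assumes "u < 2 ^ (n - 1)"
  shows "gyro_pow n u (Suc k) = (Suc k * u) mod 2 ^ (n - 1)"
proof (induction k)
  case 0 thus ?case using assms by simp
next
  case (Suc k)
  have "gyro_pow n u (Suc (Suc k)) = gyro_op n ((Suc k * u) mod 2 ^ (n - 1)) u" using Suc by simp
  also have "\<dots> = ((Suc k * u) mod 2 ^ (n - 1) + u) mod 2 ^ (n - 1)"
    using assms by (simp add: gyro_op_def Let_def)
  also have "\<dots> = (Suc (Suc k) * u) mod 2 ^ (n - 1)" by (metis mod_add_left_eq mult_Suc add.commute)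
  finally show ?case .
qed

lemma pow_H: assumes "n \<ge> 3" "2 ^ (n - 1) \<le> u" "u < 2 * 2 ^ (n - 1)"
  shows "gyro_pow n u (Suc k) = (if even k then u else 0)"
proof (induction k)
  case 0 thus ?case by simp
next
  case (Suc k)
  define m :: nat where "m = 2 ^ (n - 1)"
  define h where "h = m div 2"
  have mh: "m = 2 * h" and h2: "h \<ge> 2" using half_m[OF assms(1)] unfolding m_def h_def by auto
  have um: "m \<le> u" "u < 2 * m" using assms unfolding m_def by auto
  show ?case
  proof (cases "even k")
    case True
    have "gyro_pow n u (Suc (Suc k)) = gyro_op n u u" using Suc True by simp
    also have "\<dots> = ((h + 1) * u + (h - 1) * u) mod m"
      using um unfolding gyro_op_def Let_def m_def[symmetric] h_def[symmetric] by auto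
    also have "(h + 1) * u + (h - 1) * u = m * u"
    proof -
      obtain g where g: "h = Suc g" using h2 by (cases h) auto
      show ?thesis unfolding mh g by (simp add: algebra_simps)
    qed
    finally show ?thesis using True by simp
  next
    case False
    have "gyro_pow n u (Suc (Suc k)) = gyro_op n 0 u" using Suc False by simp
    also have "\<dots> = u mod m + m"
      using um unfolding gyro_op_def Let_def m_def[symmetric] h_def[symmetric] by auto
    also have "u mod m = u - m" using um by (simp add: le_mod_geq)
    finally show ?thesis using False um by simp
  qed
qed

lemma reach: fixes u v e :: nat
  assumes "u < 2 ^ e" "v < 2 ^ e" "u \<noteq> 0" "gcd u (2 ^ e) dvd v"
  shows "\<exists>k. (Suc k * u) mod 2 ^ e = v"
proof (cases "v = 0")
  case True
  have "(Suc (2 ^ e - 1) * u) mod 2 ^ e = 0" by simp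
  thus ?thesis using True by (intro exI[of _ "2 ^ e - 1"]) simp
next
  case False
  let ?m = "(2::nat) ^ e"
  let ?g = "gcd u ?m"
  obtain x y where xy: "u * x = ?m * y + ?g" using bezout_nat[OF assms(3)] by blast
  obtain t where t: "v = ?g * t" using assms(4) by blast
  have gm: "?g < ?m" using assms(1,3) by (meson gcd_le1_nat le_less_trans not_gr0)
  have "(x * t * u) mod ?m = ((?m * y + ?g) * t) mod ?m" by (metis xy mult.commute mult.left_commute)
  also have "\<dots> = (?g * t + ?m * (y * t)) mod ?m" by (simp add: algebra_simps)
  also have "\<dots> = v mod ?m" using t by simp
  also have "\<dots> = v" using assms(2) by simp
  finally have e: "(x * t * u) mod ?m = v" .
  have "x * t \<noteq> 0"
  proof
    assume "x * t = 0"
    hence "(x * t * u) mod ?m = 0" by (simp only: mult_0 mod_0)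
    with e False show False by simp
  qed
  then obtain k where "x * t = Suc k" by (cases "x * t", auto)
  thus ?thesis using e by metis
qed

lemma gcd_pow2: "\<exists>a. gcd (u::nat) (2 ^ e) = 2 ^ a"
proof -
  have "gcd u (2 ^ e) dvd (2::nat) ^ e" by simp
  then obtain a where "a \<le> e" "gcd u (2 ^ e) = 2 ^ a" using divides_primepow_nat[of 2] by auto
  thus ?thesis by blast
qed

lemma adj_P: fixes u v e :: nat
  assumes "u < 2 ^ e" "v < 2 ^ e" "u \<noteq> v"
  shows "\<exists>k. (Suc k * u) mod 2 ^ e = v \<or> (Suc k * v) mod 2 ^ e = u"
proof -
  obtain a b where a: "gcd u (2 ^ e) = 2 ^ a" and b: "gcd v (2 ^ e) = 2 ^ b" using gcd_pow2 by metis
  show ?thesis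
  proof (cases "u = 0")
    case True
    have "(Suc (2 ^ e - 1) * v) mod 2 ^ e = 0" by simp
    thus ?thesis using True by (intro exI[of _ "2 ^ e - 1"]) simp
  next
    case u0: False
    show ?thesis
    proof (cases "v = 0")
      case True
      have "(Suc (2 ^ e - 1) * u) mod 2 ^ e = 0" by simp
      thus ?thesis using True by (intro exI[of _ "2 ^ e - 1"]) simp
    next
      case v0: False
      show ?thesis
      proof (cases "a \<le> b")
        case True
        hence "gcd u (2 ^ e) dvd v" unfolding a by (metis b gcd_dvd1 le_imp_power_dvd dvd_trans)
        thus ?thesis using reach[OF assms(1,2) u0] by blast
      next
        case False
        hence "gcd v (2 ^ e) dvd u" unfolding b by (metis a gcd_dvd1 le_imp_power_dvd dvd_trans nat_le_linear)
        thus ?thesis using reach[OF assms(2,1) v0] by blast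
      qed
    qed
  qed
qed


lemma pow_P': "u < 2 ^ (n - 1) \<Longrightarrow> k > 0 \<Longrightarrow> gyro_pow n u k = (k * u) mod 2 ^ (n - 1)"
  using pow_P[of u n "k - 1"] by simp

lemma pow_H': "n \<ge> 3 \<Longrightarrow> 2 ^ (n - 1) \<le> u \<Longrightarrow> u < 2 * 2 ^ (n - 1) \<Longrightarrow> k > 0 \<Longrightarrow>
   gyro_pow n u k = u \<or> gyro_pow n u k = 0"
  using pow_H[of n u "k - 1"] by (cases k) auto

lemma pow_H2: "n \<ge> 3 \<Longrightarrow> 2 ^ (n - 1) \<le> u \<Longrightarrow> u < 2 * 2 ^ (n - 1) \<Longrightarrow> gyro_pow n u 2 = 0"
  using pow_H[of n u 1] by (simp add: numeral_2_eq_2)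

lemma adj_iff: assumes n: "n \<ge> 3" and u: "u < 2 * 2 ^ (n - 1)" and v: "v < 2 * 2 ^ (n - 1)"
  shows "power_graph_adj n u v \<longleftrightarrow> adjc (2 ^ (n - 1)) u v"
proof -
  define m :: nat where "m = 2 ^ (n - 1)"
  have m0: "m > 0" unfolding m_def by simp
  note defs = power_graph_adj_def adjc_def m_def[symmetric]
  show ?thesis
  proof (cases "u < m")
    case uP: True
    show ?thesis
    proof (cases "v < m")
      case vP: True
      show ?thesis
      proof
        assume "power_graph_adj n u v" thus "adjc (2 ^ (n - 1)) u v" using uP vP unfolding m_def by (simp add: power_graph_adj_def adjc_def)
      next
        assume a: "adjc (2 ^ (n - 1)) u v"
        hence "u \<noteq> v" by (simp add: adjc_def)
        from adj_P[OF uP[unfolded m_def] vP[unfolded m_def] this]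
        obtain k where "(Suc k * u) mod m = v \<or> (Suc k * v) mod m = u" unfolding m_def by blast
        hence "gyro_pow n u (Suc k) = v \<or> gyro_pow n v (Suc k) = u"
          using pow_P' uP vP unfolding m_def by auto
        thus "power_graph_adj n u v" using \<open>u \<noteq> v\<close> unfolding power_graph_adj_def by blast
      qed
    next
      case vH: False
      have vH2: "v < 2 * m" using v unfolding m_def .
      show ?thesis
      proof
        assume "power_graph_adj n u v"
        then obtain k where k: "k > 0" "gyro_pow n u k = v \<or> gyro_pow n v k = u" "u \<noteq> v"
          unfolding power_graph_adj_def by blast
        have "gyro_pow n u k < m" using pow_P'[OF uP[unfolded m_def] k(1)] m0 unfolding m_def by simp
        hence "gyro_pow n v k = u" using k vH by auto
        hence "u = 0" using pow_H'[OF n _ _ k(1), of v] vH vH2 k(3) unfolding m_def by auto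
        moreover have "v > 0" using vH m0 by simp
        ultimately show "adjc (2 ^ (n - 1)) u v" using vH unfolding m_def by (auto simp: power_graph_adj_def adjc_def)
      next
        assume "adjc (2 ^ (n - 1)) u v"
        hence "u = 0" using uP vH unfolding m_def by (auto simp: adjc_def)
        moreover have "v > 0" using vH m0 by simp
        ultimately have u0: "u = 0" "u \<noteq> v" by auto
        have "gyro_pow n v 2 = u" using pow_H2[OF n, of v] vH vH2 u0 unfolding m_def by auto
        thus "power_graph_adj n u v" using u0 unfolding power_graph_adj_def
          by (intro conjI exI[of _ 2]) auto
      qed
    qed
  next
    case uH: False
    have uH2: "u < 2 * m" using u unfolding m_def .
    show ?thesis
    proof (cases "v < m")
      case vP: True
      show ?thesis
      proof
        assume "power_graph_adj n u v"
        then obtain k where k: "k > 0" "gyro_pow n u k = v \<or> gyro_pow n v k = u" "u \<noteq> v"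
          unfolding power_graph_adj_def by blast
        have "gyro_pow n v k < m" using pow_P'[OF vP[unfolded m_def] k(1)] m0 unfolding m_def by simp
        hence "gyro_pow n u k = v" using k uH by auto
        hence "v = 0" using pow_H'[OF n _ _ k(1), of u] uH uH2 k(3) unfolding m_def by auto
        moreover have "u > 0" using uH m0 by simp
        ultimately show "adjc (2 ^ (n - 1)) u v" using uH unfolding m_def by (auto simp: power_graph_adj_def adjc_def)
      next
        assume "adjc (2 ^ (n - 1)) u v"
        hence "v = 0" using vP uH unfolding m_def by (auto simp: adjc_def)
        moreover have "u > 0" using uH m0 by simp
        ultimately have v0: "v = 0" "u \<noteq> v" by auto
        have "gyro_pow n u 2 = v" using pow_H2[OF n, of u] uH uH2 v0 unfolding m_def by auto
        thus "power_graph_adj n u v" using v0 unfolding power_graph_adj_def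
          by (intro conjI exI[of _ 2]) auto
      qed
    next
      case vH: False
      have vH2: "v < 2 * m" using v unfolding m_def .
      have "\<not> power_graph_adj n u v"
      proof
        assume "power_graph_adj n u v"
        then obtain k where k: "k > 0" "gyro_pow n u k = v \<or> gyro_pow n v k = u" "u \<noteq> v"
          unfolding power_graph_adj_def by blast
        show False using pow_H'[OF n _ _ k(1), of u] pow_H'[OF n _ _ k(1), of v] uH uH2 vH vH2 k m0
          unfolding m_def by auto
      qed
      moreover have "u > 0" "v > 0" using uH vH m0 by auto
      moreover have "\<not> adjc (2 ^ (n - 1)) u v" using uH vH \<open>u > 0\<close> \<open>v > 0\<close> unfolding m_def by (auto simp: power_graph_adj_def adjc_def)
      ultimately show ?thesis by blast
    qed
  qed
qed

theorem mainTheorem8: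
  fixes n :: nat
  assumes "n \<ge> 3"
  shows "char_poly (power_graph_adj_mat n) =
    monom 1 (2 ^ (n - 1) - 1) * [:1, 1:] ^ (2 ^ (n - 1) - 2) *
    [: 2 ^ (2 * n - 2) - 2 ^ n, 1 - 2 ^ n, 2 - 2 ^ (n - 1), 1 :]"
proof -
  define m :: nat where "m = 2 ^ (n - 1)"
  have nn: "(2::nat) ^ n = 2 * m" unfolding m_def using assms
    by (metis Suc_diff_1 bot_nat_0.not_eq_extremum not_numeral_le_zero power_Suc)
  have m2: "m \<ge> 2" using half_m[OF assms] unfolding m_def by linarith
  have "power_graph_adj_mat n = AM m"
    unfolding power_graph_adj_mat_def AM_def nn
    by (rule eq_matI, auto simp: adj_iff[OF assms] m_def)
  hence "char_poly (power_graph_adj_mat n) = X ^ (m - 1) * (X + 1) ^ (m - 2) * cub m"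
    using char_poly_AM[OF m2] by simp
  also have "\<dots> = monom 1 (m - 1) * [:1, 1:] ^ (m - 2) *
    [: int m ^ 2 - 2 * int m, 1 - 2 * int m, 2 - int m, 1 :]"
  proof -
    have c: "cub m = [: int m ^ 2 - 2 * int m, 1 - 2 * int m, 2 - int m, 1 :]"
    proof -
      have "poly (cub m) x = poly [: int m ^ 2 - 2 * int m, 1 - 2 * int m, 2 - int m, 1 :] x" for x
        using m2 by (simp add: cub_def of_nat_diff algebra_simps power2_eq_square)
      thus ?thesis using poly_eq_poly_eq_iff by blast
    qed
    have "[:1, 1:] = X + (1 :: int poly)" by (simp add: one_pCons)
    thus ?thesis unfolding c by (simp add: monom_altdef)
  qed
  also have "int m ^ 2 - 2 * int m = 2 ^ (2 * n - 2) - 2 ^ n"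
  proof -
    have "(2::int) ^ (2 * n - 2) = (2 ^ (n - 1)) ^ 2" using assms
      by (metis diff_mult_distrib2 mult.commute nat_mult_1_right power_mult)
    moreover have "(2::int) ^ n = 2 * 2 ^ (n - 1)" using assms
      by (metis Suc_diff_1 bot_nat_0.not_eq_extremum not_numeral_le_zero power_Suc)
    ultimately show ?thesis unfolding m_def by simp
  qed
  also have "1 - 2 * int m = 1 - 2 ^ n"
  proof -
    have "(2::int) ^ n = 2 * 2 ^ (n - 1)" using assms
      by (metis Suc_diff_1 bot_nat_0.not_eq_extremum not_numeral_le_zero power_Suc)
    thus ?thesis unfolding m_def by simp
  qed
  also have "2 - int m = 2 - 2 ^ (n - 1)" unfolding m_def by simp
  finally show ?thesis unfolding m_def .
qed

end
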